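(* Let $r\geq 2$ and let $\mathcal{H}=(V,E)$ be an $r$-regular $r$-uniform hypergraph with no repeated hyperedge, $V=\{v_1,\dots,v_n\}$. Let $\mathcal{A}_{\mathcal{H}}$ be its layered e-adjacency tensor, $\Delta=\max_{1\le i\le n}\deg(v_i)$ and $\Delta^\star=\max_{1\le i\le k_{\max}-1}\deg(y_i)$ (defined in the context). Then $\mathcal{A}_{\mathcal{H}}$ has an eigenvalue $\lambda$ with $|\lambda|=\max(\Delta,\Delta^\star)$.
   Context: A hypergraph $\mathcal{H}=(V,E)$ on $V=\{v_1,\dots,v_n\}$ is a family $E$ of nonempty subsets (hyperedges) of $V$; it has no repeated hyperedge if its hyperedges are pairwise distinct; it is $r$-uniform if every hyperedge has cardinality $r$, and $r$-regular if every vertex has degree $r$ (degree $\deg(v_i)$ = number of hyperedges containing $v_i$). The range is $k_{\max}=\max\{|e|:e\in E\}$. Introduce new pairwise distinct vertices $y_1,\dots,y_{k_{\max}-1}\notin V$. The layered uniform hypergraph of $\mathcal{H}$ is the $k_{\max}$-uniform hypergraph on $V\cup\{y_1,\dots,y_{k_{\max}-1}\}$ with hyperedges $e\cup\{y_{|e|},\dots,y_{k_{\max}-1}\}$ for $e\in E$; $\deg(y_i)$ is the number of these hyperedges containing $y_i$. The layered e-adjacency tensor $\mathcal{A}_{\mathcal{H}}=(a_{i_1\dots i_{k_{\max}}})$ is the symmetric hypermatrix of order $k_{\max}$ and dimension $N=n+k_{\max}-1$ (index $i\le n$ for $v_i$, index $n+l$ for $y_l$) such that: for each $e=\{v_{i_1},\dots,v_{i_j}\}\in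 E$ with $i_1<\dots<i_j$, putting $i_l=n+l-1$ for $l\in\{j+1,\dots,k_{\max}\}$, every entry whose index tuple is a permutation of $(i_1,\dots,i_{k_{\max}})$ equals $\frac{1}{(k_{\max}-1)!}$; all other entries are $0$. Eigenvalues (in the sense of Qi): for a hypermatrix $\mathcal{A}=(a_{i_1\dots i_m})$ of order $m$ and dimension $N$, $\lambda\in\mathbb{C}$ is an eigenvalue if there exists a nonzero $x\in\mathbb{C}^N$ with $\sum_{i_2,\dots,i_m=1}^{N} a_{i i_2\dots i_m}x_{i_2}\cdots x_{i_m}=\lambda x_i^{m-1}$ for all $i$. *)

theory Defs
  imports Complex_Main
begin

text \<open>A hypergraph on V = {v_1,...,v_n} is encoded with vertex v_i represented by the
  index i-1, i.e. V = {0..<n}; E is a set of nonempty subsets of {0..<n}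
  (a set, hence automatically without repeated hyperedges).\<close>

definition hypergraph :: "nat \<Rightarrow> nat set set \<Rightarrow> bool" where
  "hypergraph n E \<longleftrightarrow> (\<forall>e\<in>E. e \<noteq> {} \<and> e \<subseteq> {0..<n})"

definition uniform :: "nat \<Rightarrow> nat set set \<Rightarrow> bool" where
  "uniform r E \<longleftrightarrow> (\<forall>e\<in>E. card e = r)"

definition vdeg :: "nat set set \<Rightarrow> nat \<Rightarrow> nat" where
  "vdeg E i = card {e\<in>E. i \<in> e}"

definition regular :: "nat \<Rightarrow> nat \<Rightarrow> nat set set \<Rightarrow> bool" where
  "regular r n E \<longleftrightarrow> (\<forall>i<n. vdeg E i = r)"

definition kmax :: "nat set set \<Rightarrow> nat" where
  "kmax E = Max (card ` E)"

text \<open>The new vertex y_l (1 \<le> l \<le> kmax-1) gets index n + l - 1.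
  Layered hyperedge: e \<union> {y_|e|, ..., y_(kmax-1)}.\<close>

definition layered_edge :: "nat \<Rightarrow> nat \<Rightarrow> nat set \<Rightarrow> nat set" where
  "layered_edge n k e = e \<union> {n + l - 1 | l. card e \<le> l \<and> l \<le> k - 1}"

definition layered_edges :: "nat \<Rightarrow> nat set set \<Rightarrow> nat set set" where
  "layered_edges n E = layered_edge n (kmax E) ` E"

text \<open>Degree of y_l in the layered uniform hypergraph (number of layered hyperedges
  containing y_l; the map e \<mapsto> layered_edge is injective, so this equals the count over E).\<close>

definition ydeg :: "nat \<Rightarrow> nat set set \<Rightarrow> nat \<Rightarrow> nat" where
  "ydeg n E l = card {e\<in>E. n + l - 1 \<in> layered_edge n (kmax E) e}"

definition Delta :: "nat \<Rightarrow> nat set set \<Rightarrow> nat" where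
  "Delta n E = Max ((vdeg E) ` {0..<n})"

definition Delta_star :: "nat \<Rightarrow> nat set set \<Rightarrow> nat" where
  "Delta_star n E = Max ((ydeg n E) ` {1..kmax E - 1})"

text \<open>Hypermatrices of order m and dimension N: functions on index lists (length m, entries
  in {0..<N}; index i stands for the (i+1)-st coordinate).\<close>

text \<open>Layered e-adjacency tensor: an entry is 1/(kmax-1)! iff its index tuple is a
  permutation of (the sorted tuple of) some layered hyperedge, i.e. its entries are distinct
  and form a layered hyperedge.\<close>

definition layered_tensor :: "nat \<Rightarrow> nat set set \<Rightarrow> nat list \<Rightarrow> real" where
  "layered_tensor n E ix =
     (if length ix = kmax E \<and> distinct ix \<and> set ix \<in> layered_edges n E
      then 1 / fact (kmax E - 1) else 0)"

text \<open>Eigenvalue in the sense of Qi.\<close>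

definition tensor_eigenvalue :: "nat \<Rightarrow> nat \<Rightarrow> (nat list \<Rightarrow> real) \<Rightarrow> complex \<Rightarrow> bool" where
  "tensor_eigenvalue m N A lam \<longleftrightarrow>
     (\<exists>x :: nat \<Rightarrow> complex. (\<exists>i<N. x i \<noteq> 0) \<and>
        (\<forall>i<N. (\<Sum>ix\<in>{ix. length ix = m - 1 \<and> set ix \<subseteq> {0..<N}}.
                   of_real (A (i # ix)) * prod_list (map x ix)) = lam * x i ^ (m - 1)))"

end

theory Submission
  imports Defs "HOL-Combinatorics.Multiset_Permutations"
begin

theorem mainTheorem3:
  fixes n r :: nat and E :: "nat set set"
  assumes "r \<ge> 2"
    and "n \<ge> 1"
    and "hypergraph n E"
    and "uniform r E"
    and "regular r n E"
  shows "\<exists>lam. tensor_eigenvalue (kmax E) (n + kmax E - 1) (layered_tensor n E) lam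
             \<and> cmod lam = real (max (Delta n E) (Delta_star n E))"
proof -
  have sub: "\<And>e. e \<in> E \<Longrightarrow> e \<subseteq> {0..<n}" using assms(3) unfolding hypergraph_def by blast
  have cardE: "\<And>e. e \<in> E \<Longrightarrow> card e = r" using assms(4) unfolding uniform_def by blast
  have finE: "finite E"
    by (rule finite_subset[of E "Pow {0..<n}"]) (use sub in auto)
  have fine: "\<And>e. e \<in> E \<Longrightarrow> finite e" using sub finite_subset by blast
  have deg: "\<And>i. i < n \<Longrightarrow> vdeg E i = r" using assms(5) unfolding regular_def by blast
  have "vdeg E 0 = r" using deg assms(2) by simp
  then have "card {e\<in>E. 0 \<in> e} \<noteq> 0" using assms(1) unfolding vdeg_def by simp
  then have Ene: "E \<noteq> {}" by auto
  have km: "kmax E = r"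
  proof -
    have "card ` E = {r}" using Ene cardE by auto
    then show ?thesis unfolding kmax_def by simp
  qed
  have le: "\<And>e. e \<in> E \<Longrightarrow> layered_edge n r e = e"
    unfolding layered_edge_def using cardE assms(1) by fastforce
  have les: "layered_edges n E = E"
    unfolding layered_edges_def km using le by (simp add: image_cong)
  have yd: "\<And>l. l \<in> {1..r-1} \<Longrightarrow> ydeg n E l = 0"
  proof -
    fix l assume l: "l \<in> {1..r-1}"
    have "{e\<in>E. n + l - 1 \<in> layered_edge n (kmax E) e} = {}"
      using l le sub km by fastforce
    then show "ydeg n E l = 0" unfolding ydeg_def by (metis card.empty)
  qed
  have "ydeg n E ` {1..r-1} = {0}" using yd assms(1) by force
  then have DS: "Delta_star n E = 0" unfolding Delta_star_def km by simp
  have "vdeg E ` {0..<n} = {r}"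
  proof
    show "vdeg E ` {0..<n} \<subseteq> {r}" using deg by auto
    show "{r} \<subseteq> vdeg E ` {0..<n}" using deg assms(2) by (auto intro!: image_eqI[of r _ 0])
  qed
  then have D: "Delta n E = r" unfolding Delta_def by simp
  define x :: "nat \<Rightarrow> complex" where "x j = (if j < n then 1 else 0)" for j
  define N where "N = n + r - 1"
  define S where "S = {ix. length ix = r - 1 \<and> set ix \<subseteq> {0..<N}}"
  have finS: "finite S" unfolding S_def using finite_lists_length_eq[OF finite_atLeastLessThan, of 0 N "r - 1"] by (simp add: conj_commute)
  have key: "(\<Sum>ix\<in>S. of_real (layered_tensor n E (i # ix)) * prod_list (map x ix)) = r * x i ^ (r - 1)"
    if i: "i < N" for i
  proof (cases "i < n")
    case False
    have "layered_tensor n E (i # ix) = 0" for ix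
      unfolding layered_tensor_def les using False sub by fastforce
    then show ?thesis using False assms(1) by (simp add: x_def)
  next
    case True
    define c :: complex where "c = of_real (1 / fact (r - 1))"
    define T where "T = {ix\<in>S. distinct (i # ix) \<and> set (i # ix) \<in> E}"
    have g: "of_real (layered_tensor n E (i # ix)) * prod_list (map x ix) = (if ix \<in> T then c else 0)"
      if "ix \<in> S" for ix
    proof (cases "ix \<in> T")
      case True
      then have "set ix \<subseteq> {0..<n}" unfolding T_def using sub by auto
      then have "map x ix = map (\<lambda>_. 1) ix" by (auto simp: x_def)
      then have "prod_list (map x ix) = 1" by (simp add: prod_list_replicate map_replicate_const)
      then show ?thesis using True that assms(1) unfolding layered_tensor_def les km T_def S_def c_def by auto
    next
      case False
      then show ?thesis using that unfolding layered_tensor_def les km T_def S_def by auto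
    qed
    have "(\<Sum>ix\<in>S. of_real (layered_tensor n E (i # ix)) * prod_list (map x ix)) = (\<Sum>ix\<in>S. if ix \<in> T then c else 0)"
      using g by (rule sum.cong[OF refl])
    also have "\<dots> = (\<Sum>ix\<in>T. c)"
      by (rule sum.mono_neutral_cong_right) (use finS in \<open>auto simp: T_def\<close>)
    also have "\<dots> = of_nat (card T) * c" by simp
    finally have s1: "(\<Sum>ix\<in>S. of_real (layered_tensor n E (i # ix)) * prod_list (map x ix)) = of_nat (card T) * c" .
    define F where "F = {e\<in>E. i \<in> e}"
    have TU: "T = (\<Union>e\<in>F. permutations_of_set (e - {i}))"
    proof
      show "T \<subseteq> (\<Union>e\<in>F. permutations_of_set (e - {i}))"
      proof
        fix ix assume "ix \<in> T"
        then have "distinct (i # ix)" "set (i # ix) \<in> E" unfolding T_def by auto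
        then show "ix \<in> (\<Union>e\<in>F. permutations_of_set (e - {i}))"
          unfolding F_def permutations_of_set_def by (intro UN_I[of "set (i # ix)"]) auto
      qed
    next
      show "(\<Union>e\<in>F. permutations_of_set (e - {i})) \<subseteq> T"
      proof
        fix ix assume "ix \<in> (\<Union>e\<in>F. permutations_of_set (e - {i}))"
        then obtain e where e: "e \<in> E" "i \<in> e" "set ix = e - {i}" "distinct ix"
          unfolding F_def permutations_of_set_def by auto
        have "length ix = card (e - {i})" using e distinct_card by metis
        also have "\<dots> = r - 1" using e cardE fine by simp
        finally have "length ix = r - 1" .
        moreover have "set ix \<subseteq> {0..<N}"
        proof -
          have "set ix \<subseteq> {0..<n}" using e sub[OF e(1)] by blast
          then show ?thesis unfolding N_def using assms(1) by auto
        qed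
        moreover have "distinct (i # ix)" using e by auto
        moreover have "set (i # ix) = e" using e by auto
        ultimately show "ix \<in> T" unfolding T_def S_def using e by auto
      qed
    qed
    have "card T = (\<Sum>e\<in>F. card (permutations_of_set (e - {i})))"
      unfolding TU
    proof (rule card_UN_disjoint)
      show "finite F" unfolding F_def using finE by simp
      show "\<forall>e\<in>F. finite (permutations_of_set (e - {i}))"
        using fine unfolding F_def by (auto intro: finite_permutations_of_set)
      show "\<forall>e\<in>F. \<forall>f\<in>F. e \<noteq> f \<longrightarrow> permutations_of_set (e - {i}) \<inter> permutations_of_set (f - {i}) = {}"
        unfolding F_def permutations_of_set_def by blast
    qed
    also have "\<dots> = (\<Sum>e\<in>F. fact (r - 1))"
      by (rule sum.cong[OF refl]) (use fine cardE in \<open>auto simp: F_def\<close>)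
    also have "\<dots> = card F * fact (r - 1)" by simp
    also have "card F = r" using deg True unfolding vdeg_def F_def by simp
    finally have "card T = r * fact (r - 1)" .
    then have "of_nat (card T) * c = (of_nat r :: complex)"
      unfolding c_def by (simp add: of_real_divide)
    then show ?thesis using s1 True by (simp add: x_def)
  qed
  have ev: "tensor_eigenvalue r N (layered_tensor n E) (of_nat r)"
    unfolding tensor_eigenvalue_def
  proof (intro exI[of _ x] conjI allI impI)
    show "\<exists>i<N. x i \<noteq> 0" using assms unfolding N_def x_def by (intro exI[of _ 0]) auto
    fix i assume "i < N"
    then show "(\<Sum>ix\<in>{ix. length ix = r - 1 \<and> set ix \<subseteq> {0..<N}}.
                   of_real (layered_tensor n E (i # ix)) * prod_list (map x ix)) = of_nat r * x i ^ (r - 1)"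
      using key unfolding S_def by simp
  qed
  show ?thesis
    by (rule exI[of _ "of_nat r"]) (use ev D DS in \<open>simp add: km N_def\<close>)
qed

end
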